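(* Suppose that \begin{itemize} \item $X$ is geodetic; and \item either \begin{itemize} \item $X$ is Menger convex and has no 4-cuts, or \item $X$ is geodesic. \end{itemize} \end{itemize} Then $\mathit{HM}_2(X)=0$.
   Context: Let $X$ be a metric space. Write $y$ is between $x$ and $z$ if $d(x,y)+d(y,z)=d(x,z)$, and strictly between if moreover $x\neq y\neq z$. $X$ is Menger convex if for any two distinct points there is a point strictly between them. $X$ has no 4-cuts if whenever $y_1\neq y_2$, $d(x,y_1)+d(y_1,y_2)=d(x,y_2)$ and $d(y_1,y_2)+d(y_2,z)=d(y_1,z)$ imply $d(x,z)=d(x,y_1)+d(y_1,y_2)+d(y_2,z)$. $X$ is geodesic if for any $x,y$ there is an isometry $\gamma:[0,a]\to X$ with $\gamma(0)=x$, $\gamma(a)=y$. $X$ is geodetic if for any distinct $x,z$, whenever $y_1$ and $y_2$ are both between $x$ and $z$, either ($y_1$ is between $x$ and $y_2$ and $y_2$ is between $y_1$ and $z$) or ($y_2$ is between $x$ and $y_1$ and $y_1$ is between $y_2$ and $z$). The magnitude homology $\mathit{HM}^\ell_n(X)$ is the degree-$n$ homology of the chain complex whose $n$-chains in grading $\ell$ are the free abelian group on symbols $\langle x_0,\dots,x_n\rangle$ with $x_i\neq x_{i+1}$ and $d(x_0,x_1)+\cdots+d(x_{n-1},x_n)=\ell$, with boundary $\sum_i(-1)^i d^i$, where $d^i$ deletes $x_i$ if $x_i$ is between $x_{i-1}$ and $x_{i+1}$ and is $0$ otherwise (deleting an endpoint always gives $0$); $\mathit{HM}_2(X)=0$ means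 vanishing in all gradings. *)

theory Defs
  imports "HOL-Analysis.Analysis"
begin

definition between :: "'a metric \<Rightarrow> 'a \<Rightarrow> 'a \<Rightarrow> 'a \<Rightarrow> bool" where
  "between m x y z \<longleftrightarrow> mdist m x y + mdist m y z = mdist m x z"

definition menger_convex :: "'a metric \<Rightarrow> bool" where
  "menger_convex m \<longleftrightarrow> (\<forall>x\<in>mspace m. \<forall>z\<in>mspace m. x \<noteq> z \<longrightarrow>
      (\<exists>y\<in>mspace m. x \<noteq> y \<and> y \<noteq> z \<and> between m x y z))"

definition no_4_cuts :: "'a metric \<Rightarrow> bool" where
  "no_4_cuts m \<longleftrightarrow> (\<forall>x\<in>mspace m. \<forall>y1\<in>mspace m. \<forall>y2\<in>mspace m. \<forall>z\<in>mspace m.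
      y1 \<noteq> y2 \<and> between m x y1 y2 \<and> between m y1 y2 z \<longrightarrow>
      mdist m x z = mdist m x y1 + mdist m y1 y2 + mdist m y2 z)"

definition geodesic_space :: "'a metric \<Rightarrow> bool" where
  "geodesic_space m \<longleftrightarrow> (\<forall>x\<in>mspace m. \<forall>y\<in>mspace m. \<exists>a::real. \<exists>\<gamma>::real \<Rightarrow> 'a.
      0 \<le> a \<and> \<gamma> ` {0..a} \<subseteq> mspace m \<and>
      (\<forall>s\<in>{0..a}. \<forall>t\<in>{0..a}. mdist m (\<gamma> s) (\<gamma> t) = \<bar>s - t\<bar>) \<and>
      \<gamma> 0 = x \<and> \<gamma> a = y)"

definition geodetic :: "'a metric \<Rightarrow> bool" where
  "geodetic m \<longleftrightarrow> (\<forall>x\<in>mspace m. \<forall>z\<in>mspace m. \<forall>y1\<in>mspace m. \<forall>y2\<in>mspace m.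
      x \<noteq> z \<and> between m x y1 z \<and> between m x y2 z \<longrightarrow>
      (between m x y1 y2 \<and> between m y1 y2 z) \<or> (between m x y2 y1 \<and> between m y2 y1 z))"

text \<open>Generators of the magnitude chain group MC_n^l: tuples (x_0,...,x_n) as lists
  of length n+1, consecutive entries distinct, total length l.\<close>

definition mag_gen :: "'a metric \<Rightarrow> nat \<Rightarrow> real \<Rightarrow> 'a list \<Rightarrow> bool" where
  "mag_gen m n l xs \<longleftrightarrow> length xs = n + 1 \<and> set xs \<subseteq> mspace m \<and>
      (\<forall>i<n. xs ! i \<noteq> xs ! Suc i) \<and>
      (\<Sum>i<n. mdist m (xs ! i) (xs ! Suc i)) = l"

text \<open>Chains: finitely supported integer-valued functions on generators (free abelian group).\<close>

definition mag_chains :: "'a metric \<Rightarrow> nat \<Rightarrow> real \<Rightarrow> ('a list \<Rightarrow> int) set" where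
  "mag_chains m n l = {c. finite {xs. c xs \<noteq> 0} \<and> (\<forall>xs. c xs \<noteq> 0 \<longrightarrow> mag_gen m n l xs)}"

definition bd_coeff :: "'a metric \<Rightarrow> 'a list \<Rightarrow> 'a list \<Rightarrow> int" where
  "bd_coeff m xs ys = (\<Sum>i\<in>{1..<length xs - 1}.
      if between m (xs ! (i - 1)) (xs ! i) (xs ! (i + 1)) \<and> ys = take i xs @ drop (Suc i) xs
      then (-1) ^ i else 0)"

definition mag_boundary :: "'a metric \<Rightarrow> ('a list \<Rightarrow> int) \<Rightarrow> 'a list \<Rightarrow> int" where
  "mag_boundary m c ys = (\<Sum>xs\<in>{xs. c xs \<noteq> 0}. c xs * bd_coeff m xs ys)"

definition HM_vanishes :: "'a metric \<Rightarrow> nat \<Rightarrow> bool" where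
  "HM_vanishes m n \<longleftrightarrow> (\<forall>l::real. \<forall>c\<in>mag_chains m n l.
      mag_boundary m c = (\<lambda>_. 0) \<longrightarrow> (\<exists>b\<in>mag_chains m (Suc n) l. mag_boundary m b = c))"

end

theory Submission
  imports Defs
begin


lemma bd3: "bd_coeff m [a,b,c] ys = (if between m a b c \<and> ys = [a,c] then -1 else 0)"
proof -
  have e: "{1..<length [a,b,c] - 1} = {1::nat}" by auto
  show ?thesis unfolding bd_coeff_def e by simp
qed

lemma bd4: "bd_coeff m [a,b,c,d] ys = (if between m a b c \<and> ys = [a,c,d] then -1 else 0)
   + (if between m b c d \<and> ys = [a,b,d] then 1 else 0)"
proof -
  have "{1..<length [a,b,c,d] - 1} = {1::nat,2}" by auto
  then show ?thesis by (simp add: bd_coeff_def numeral_2_eq_2)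
qed

lemma gen3: "mag_gen m 2 l xs \<longleftrightarrow> (\<exists>a y b. xs = [a,y,b] \<and> a \<in> mspace m \<and> y \<in> mspace m \<and> b \<in> mspace m
   \<and> a \<noteq> y \<and> y \<noteq> b \<and> mdist m a y + mdist m y b = l)"
proof
  assume h: "mag_gen m 2 l xs"
  then have len: "length xs = 3" by (simp add: mag_gen_def)
  define a y b where "a = xs!0" "y = xs!1" "b = xs!2"
  have xs: "xs = [a,y,b]" unfolding a_y_b_def
    using len by (intro nth_equalityI) (auto simp: less_Suc_eq numeral_3_eq_3 numeral_2_eq_2)
  show "\<exists>a y b. xs = [a,y,b] \<and> a \<in> mspace m \<and> y \<in> mspace m \<and> b \<in> mspace m
   \<and> a \<noteq> y \<and> y \<noteq> b \<and> mdist m a y + mdist m y b = l"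
    using h unfolding xs mag_gen_def by (auto simp: numeral_2_eq_2 less_Suc_eq)
next
  assume "\<exists>a y b. xs = [a,y,b] \<and> a \<in> mspace m \<and> y \<in> mspace m \<and> b \<in> mspace m
   \<and> a \<noteq> y \<and> y \<noteq> b \<and> mdist m a y + mdist m y b = l"
  then show "mag_gen m 2 l xs" unfolding mag_gen_def by (auto simp: numeral_2_eq_2 less_Suc_eq)
qed

lemma gen4: "\<lbrakk>a \<in> mspace m; y \<in> mspace m; z \<in> mspace m; b \<in> mspace m;
   a \<noteq> y; y \<noteq> z; z \<noteq> b; mdist m a y + mdist m y z + mdist m z b = l\<rbrakk> \<Longrightarrow> mag_gen m 3 l [a,y,z,b]"
  unfolding mag_gen_def by (auto simp: numeral_3_eq_3 less_Suc_eq)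

lemma bd_sup: "finite T \<Longrightarrow> {xs. c xs \<noteq> 0} \<subseteq> T \<Longrightarrow>
   mag_boundary m c ys = (\<Sum>xs\<in>T. c xs * bd_coeff m xs ys)"
  unfolding mag_boundary_def by (rule sum.mono_neutral_left) auto

lemma good_z:
  assumes hyp: "(menger_convex m \<and> no_4_cuts m) \<or> geodesic_space m"
    and a: "a \<in> mspace m" and y: "y \<in> mspace m" and b: "b \<in> mspace m"
    and ay: "a \<noteq> y" and nb: "\<not> between m a y b"
  shows "\<exists>z\<in>mspace m. z \<noteq> a \<and> z \<noteq> y \<and> between m a z y \<and> \<not> between m z y b"
  using hyp
proof
  assume h: "menger_convex m \<and> no_4_cuts m"
  then obtain z where z: "z \<in> mspace m" "a \<noteq> z" "z \<noteq> y" "between m a z y"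
    using a y ay unfolding menger_convex_def by blast
  have "\<not> between m z y b"
  proof
    assume zb: "between m z y b"
    have "mdist m a b = mdist m a z + mdist m z y + mdist m y b"
      using h a z y b zb unfolding no_4_cuts_def by blast
    then show False using nb z(4) unfolding between_def by linarith
  qed
  then show ?thesis using z by auto
next
  assume "geodesic_space m"
  then obtain D g where g: "0 \<le> D" "g ` {0..D} \<subseteq> mspace m"
    "\<forall>s\<in>{0..D}. \<forall>t\<in>{0..D}. mdist m (g s) (g t) = \<bar>s - t\<bar>" "g 0 = a" "g D = y"
    unfolding geodesic_space_def using a y by blast
  have D: "mdist m a y = D" using g by force
  have Dpos: "D > 0" using D ay a y mdist_zero[of a m y] mdist_nonneg[of m a y] by linarith
  define e where "e = mdist m a y + mdist m y b - mdist m a b"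
  have "mdist m a b \<le> mdist m a y + mdist m y b" by (rule mdist_triangle[OF a y b])
  then have epos: "e > 0" using nb unfolding e_def between_def by linarith
  define t where "t = min (D/2) (e/4)"
  have t: "0 < t" "t < D" "t \<le> e/4" using Dpos epos unfolding t_def by auto
  define z where "z = g t"
  have tin: "t \<in> {0..D}" using t by auto
  have zM: "z \<in> mspace m" using g tin unfolding z_def by auto
  have az: "mdist m a z = t" using g tin unfolding z_def by force
  have zy: "mdist m z y = D - t" using g tin t unfolding z_def by force
  have "z \<noteq> a"
  proof
    assume "z = a"
    then have "t = 0" using az mdist_zero[OF a a] by simp
    then show False using t by simp
  qed
  moreover have "z \<noteq> y"
  proof
    assume "z = y"
    then have "D - t = 0" using zy mdist_zero[OF y y] by simp
    then show False using t by simp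
  qed
  moreover have "between m a z y" unfolding between_def using az zy D by simp
  moreover have "\<not> between m z y b"
  proof
    assume "between m z y b"
    then have 1: "mdist m z b = D - t + mdist m y b" using zy unfolding between_def by simp
    have "mdist m z b \<le> mdist m z a + mdist m a b" by (rule mdist_triangle[OF zM a b])
    then have "D - t + mdist m y b \<le> t + mdist m a b" using 1 az mdist_commute[of m z a] by simp
    then have "e \<le> 2 * t" using D unfolding e_def by linarith
    then show False using t(3) epos by linarith
  qed
  ultimately show ?thesis using zM by blast
qed

lemma per_gen:
  fixes y0 :: "'a \<Rightarrow> 'a \<Rightarrow> 'a"
  assumes geod: "geodetic m"
    and hyp: "(menger_convex m \<and> no_4_cuts m) \<or> geodesic_space m"
    and y0: "\<And>a b. (\<exists>y\<in>mspace m. y \<noteq> a \<and> y \<noteq> b \<and> between m a y b) \<Longrightarrow>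
       y0 a b \<in> mspace m \<and> y0 a b \<noteq> a \<and> y0 a b \<noteq> b \<and> between m a (y0 a b) b"
    and gen: "mag_gen m 2 l xs"
  shows "\<exists>(s::int) w. (s \<noteq> 0 \<longrightarrow> mag_gen m 3 l w) \<and> (\<forall>ys. s * bd_coeff m w ys =
     (if ys = xs then 1 else 0) - (if between m (xs!0) (xs!1) (xs!2) \<and> ys = [xs!0, y0 (xs!0) (xs!2), xs!2] then 1 else 0))"
proof -
  obtain a y b where xs: "xs = [a,y,b]" and M: "a \<in> mspace m" "y \<in> mspace m" "b \<in> mspace m"
    and ne: "a \<noteq> y" "y \<noteq> b" and L: "mdist m a y + mdist m y b = l"
    using gen unfolding gen3 by blast
  show ?thesis
  proof (cases "between m a y b")
    case False
    then obtain z where z: "z \<in> mspace m" "z \<noteq> a" "z \<noteq> y" "between m a z y" "\<not> between m z y b"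
      using good_z[OF hyp M ne(1)] by blast
    have "mag_gen m 3 l [a,z,y,b]"
      by (rule gen4) (use M z ne L in \<open>auto simp: between_def\<close>)
    moreover have "\<forall>ys. (-1) * bd_coeff m [a,z,y,b] ys =
     (if ys = xs then 1 else 0) - (if between m (xs!0) (xs!1) (xs!2) \<and> ys = [xs!0, y0 (xs!0) (xs!2), xs!2] then 1 else 0)"
      using False z unfolding xs bd4 by auto
    ultimately show ?thesis by (intro exI[of _ "-1"] exI[of _ "[a,z,y,b]"]) auto
  next
    case True
    let ?y0 = "y0 a b"
    have Yall: "?y0 \<in> mspace m \<and> ?y0 \<noteq> a \<and> ?y0 \<noteq> b \<and> between m a ?y0 b"
      using True M ne by (intro y0) auto
    then have Y: "?y0 \<in> mspace m" "?y0 \<noteq> a" "?y0 \<noteq> b" "between m a ?y0 b" by auto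
    show ?thesis
    proof (cases "y = ?y0")
      case True
      then show ?thesis using Y unfolding xs by (intro exI[of _ 0]) auto
    next
      case yne: False
      have ab: "a \<noteq> b"
      proof
        assume "a = b"
        then have "mdist m a y + mdist m y a = 0" using True M unfolding between_def by simp
        then show False using ne M mdist_nonneg[of m a y] mdist_nonneg[of m y a] mdist_zero[of a m y] by linarith
      qed
      have "(between m a y ?y0 \<and> between m y ?y0 b) \<or> (between m a ?y0 y \<and> between m ?y0 y b)"
        using geod M Y True ab unfolding geodetic_def by blast
      then show ?thesis
      proof
        assume A: "between m a y ?y0 \<and> between m y ?y0 b"
        have "mag_gen m 3 l [a,y,?y0,b]"
          by (rule gen4) (use M Y ne yne L A True in \<open>auto simp: between_def\<close>)
        moreover have "\<forall>ys. 1 * bd_coeff m [a,y,?y0,b] ys =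
          (if ys = xs then 1 else 0) - (if between m (xs!0) (xs!1) (xs!2) \<and> ys = [xs!0, y0 (xs!0) (xs!2), xs!2] then 1 else 0)"
          using A True yne unfolding xs bd4 by auto
        ultimately show ?thesis by (intro exI[of _ 1] exI[of _ "[a,y,?y0,b]"]) auto
      next
        assume B: "between m a ?y0 y \<and> between m ?y0 y b"
        have "mag_gen m 3 l [a,?y0,y,b]"
          by (rule gen4) (use M Y ne yne L B True in \<open>auto simp: between_def\<close>)
        moreover have "\<forall>ys. (-1) * bd_coeff m [a,?y0,y,b] ys =
          (if ys = xs then 1 else 0) - (if between m (xs!0) (xs!1) (xs!2) \<and> ys = [xs!0, y0 (xs!0) (xs!2), xs!2] then 1 else 0)"
          using B True yne unfolding xs bd4 by auto
        ultimately show ?thesis by (intro exI[of _ "-1"] exI[of _ "[a,?y0,y,b]"]) auto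
      qed
    qed
  qed
qed

theorem theorem7p22:
  fixes m :: "'a metric"
  assumes "geodetic m"
    and "(menger_convex m \<and> no_4_cuts m) \<or> geodesic_space m"
  shows "HM_vanishes m 2"
  unfolding HM_vanishes_def
proof (intro allI ballI impI)
  fix l c
  assume cC: "c \<in> mag_chains m 2 l" and cyc: "mag_boundary m c = (\<lambda>_. 0)"
  define S where "S = {xs. c xs \<noteq> 0}"
  have finS: "finite S" and genS: "\<And>xs. xs \<in> S \<Longrightarrow> mag_gen m 2 l xs"
    using cC unfolding mag_chains_def S_def by auto
  define y0 where "y0 = (\<lambda>a b. SOME y. y \<in> mspace m \<and> y \<noteq> a \<and> y \<noteq> b \<and> between m a y b)"
  have y0: "y0 a b \<in> mspace m \<and> y0 a b \<noteq> a \<and> y0 a b \<noteq> b \<and> between m a (y0 a b) b"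
    if "\<exists>y\<in>mspace m. y \<noteq> a \<and> y \<noteq> b \<and> between m a y b" for a b
    unfolding y0_def by (rule someI_ex) (use that in blast)
  define p where "p = (\<lambda>xs::'a list. [xs!0, y0 (xs!0) (xs!2), xs!2])"
  define bt where "bt = (\<lambda>xs::'a list. between m (xs!0) (xs!1) (xs!2))"
  define P where "P = (\<lambda>xs (s::int) w. (s \<noteq> 0 \<longrightarrow> mag_gen m 3 l w) \<and> (\<forall>ys. s * bd_coeff m w ys =
     (if ys = xs then 1 else 0) - (if bt xs \<and> ys = p xs then 1 else 0)))"
  have "\<forall>xs. \<exists>sw. mag_gen m 2 l xs \<longrightarrow> P xs (fst sw) (snd sw)"
  proof
    fix xs
    show "\<exists>sw. mag_gen m 2 l xs \<longrightarrow> P xs (fst sw) (snd sw)"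
    proof (cases "mag_gen m 2 l xs")
      case True
      from per_gen[OF assms y0 True] obtain s w where
        "(s \<noteq> 0 \<longrightarrow> mag_gen m 3 l w) \<and> (\<forall>ys. s * bd_coeff m w ys =
     (if ys = xs then 1 else 0) - (if between m (xs!0) (xs!1) (xs!2) \<and> ys = [xs!0, y0 (xs!0) (xs!2), xs!2] then 1 else 0))"
        by blast
      then have "P xs s w" unfolding P_def p_def bt_def by simp
      then show ?thesis by (intro exI[of _ "(s,w)"]) simp
    qed simp
  qed
  then obtain sw where sw: "\<And>xs. mag_gen m 2 l xs \<Longrightarrow> P xs (fst (sw xs)) (snd (sw xs))"
    by metis
  define s where "s = (\<lambda>xs. fst (sw xs))"
  define w where "w = (\<lambda>xs. snd (sw xs))"
  have Pxs: "P xs (s xs) (w xs)" if "xs \<in> S" for xs using sw genS that unfolding s_def w_def by blast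
  define b where "b = (\<lambda>zs. \<Sum>xs\<in>S. c xs * (if zs = w xs then s xs else 0))"
  have suppb: "{zs. b zs \<noteq> 0} \<subseteq> w ` S"
  proof
    fix zs assume "zs \<in> {zs. b zs \<noteq> 0}"
    then obtain xs where "xs \<in> S" "c xs * (if zs = w xs then s xs else 0) \<noteq> 0"
      unfolding b_def using sum.not_neutral_contains_not_neutral by blast
    then show "zs \<in> w ` S" by (auto split: if_splits)
  qed
  have finb: "finite (w ` S)" using finS by simp
  have "b \<in> mag_chains m 3 l"
    unfolding mag_chains_def
  proof (intro CollectI conjI allI impI)
    show "finite {xs. b xs \<noteq> 0}" using suppb finb finite_subset by blast
    fix zs assume "b zs \<noteq> 0"
    then obtain xs where xs: "xs \<in> S" "c xs * (if zs = w xs then s xs else 0) \<noteq> 0"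
      unfolding b_def using sum.not_neutral_contains_not_neutral by blast
    then have "zs = w xs" "s xs \<noteq> 0" by (auto split: if_splits)
    then show "mag_gen m 3 l zs" using Pxs[OF xs(1)] unfolding P_def by simp
  qed
  moreover have "mag_boundary m b = c"
  proof
    fix ys
    have cycv: "(\<Sum>xs\<in>S. if bt xs \<and> xs!0 = a \<and> xs!2 = a' then c xs else 0) = 0" for a a'
    proof -
      have "0 = mag_boundary m c [a,a']" using cyc by simp
      also have "\<dots> = (\<Sum>xs\<in>S. c xs * bd_coeff m xs [a,a'])"
        by (rule bd_sup) (use finS in \<open>auto simp: S_def\<close>)
      also have "\<dots> = (\<Sum>xs\<in>S. - (if bt xs \<and> xs!0 = a \<and> xs!2 = a' then c xs else 0))"
      proof (rule sum.cong)
        fix xs assume "xs \<in> S"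
        then obtain x0 x1 x2 where "xs = [x0,x1,x2]" using genS[of xs] unfolding gen3 by blast
        then show "c xs * bd_coeff m xs [a,a'] = - (if bt xs \<and> xs!0 = a \<and> xs!2 = a' then c xs else 0)"
          by (auto simp add: bd3 bt_def)
      qed simp
      also have "\<dots> = - (\<Sum>xs\<in>S. if bt xs \<and> xs!0 = a \<and> xs!2 = a' then c xs else 0)"
        by (simp add: sum_negf)
      finally show ?thesis by simp
    qed
    have second: "(\<Sum>xs\<in>S. if bt xs \<and> ys = p xs then c xs else 0) = 0"
    proof (cases "ys = [ys!0, y0 (ys!0) (ys!2), ys!2]")
      case True
      have "(\<Sum>xs\<in>S. if bt xs \<and> ys = p xs then c xs else 0)
          = (\<Sum>xs\<in>S. if bt xs \<and> xs!0 = ys!0 \<and> xs!2 = ys!2 then c xs else 0)"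
      proof (rule sum.cong)
        fix xs
        have "(ys = p xs) = (xs!0 = ys!0 \<and> xs!2 = ys!2)"
          using True unfolding p_def by (metis nth_Cons_0 nth_Cons_Suc numeral_2_eq_2)
        then show "(if bt xs \<and> ys = p xs then c xs else 0) =
          (if bt xs \<and> xs!0 = ys!0 \<and> xs!2 = ys!2 then c xs else 0)" by simp
      qed simp
      then show ?thesis using cycv by simp
    next
      case False
      have "ys \<noteq> p xs" for xs
      proof
        assume "ys = p xs"
        then have "ys = [ys!0, y0 (ys!0) (ys!2), ys!2]" unfolding p_def by simp
        then show False using False by simp
      qed
      then show ?thesis by simp
    qed
    have "mag_boundary m b ys = (\<Sum>zs\<in>w ` S. b zs * bd_coeff m zs ys)"
      by (rule bd_sup[OF finb suppb])
    also have "\<dots> = (\<Sum>zs\<in>w ` S. \<Sum>xs\<in>S. c xs * (if zs = w xs then s xs else 0) * bd_coeff m zs ys)"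
      unfolding b_def by (simp add: sum_distrib_right)
    also have "\<dots> = (\<Sum>xs\<in>S. \<Sum>zs\<in>w ` S. c xs * (if zs = w xs then s xs else 0) * bd_coeff m zs ys)"
      by (rule sum.swap)
    also have "\<dots> = (\<Sum>xs\<in>S. c xs * (s xs * bd_coeff m (w xs) ys))"
    proof (rule sum.cong)
      fix xs assume xs: "xs \<in> S"
      have "(\<Sum>zs\<in>w ` S. c xs * (if zs = w xs then s xs else 0) * bd_coeff m zs ys)
          = (\<Sum>zs\<in>w ` S. if zs = w xs then c xs * (s xs * bd_coeff m (w xs) ys) else 0)"
        by (rule sum.cong) auto
      also have "\<dots> = c xs * (s xs * bd_coeff m (w xs) ys)"
        using finb xs by (simp add: sum.delta)
      finally show "(\<Sum>zs\<in>w ` S. c xs * (if zs = w xs then s xs else 0) * bd_coeff m zs ys)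
          = c xs * (s xs * bd_coeff m (w xs) ys)" .
    qed simp
    also have "\<dots> = (\<Sum>xs\<in>S. (if ys = xs then c xs else 0) - (if bt xs \<and> ys = p xs then c xs else 0))"
    proof (rule sum.cong)
      fix xs assume xs: "xs \<in> S"
      then have "s xs * bd_coeff m (w xs) ys = (if ys = xs then 1 else 0) - (if bt xs \<and> ys = p xs then 1 else 0)"
        using Pxs[OF xs] unfolding P_def by blast
      then show "c xs * (s xs * bd_coeff m (w xs) ys) =
          (if ys = xs then c xs else 0) - (if bt xs \<and> ys = p xs then c xs else 0)" by simp
    qed simp
    also have "\<dots> = (\<Sum>xs\<in>S. if ys = xs then c xs else 0) - (\<Sum>xs\<in>S. if bt xs \<and> ys = p xs then c xs else 0)"
      by (simp add: sum_subtractf)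
    also have "\<dots> = c ys" using second finS by (simp add: sum.delta S_def)
    finally show "mag_boundary m b ys = c ys" .
  qed
  ultimately show "\<exists>b\<in>mag_chains m (Suc 2) l. mag_boundary m b = c"
    by (intro bexI[of _ b]) (auto simp: numeral_3_eq_3 numeral_2_eq_2)
qed

end
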